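(* Let $(\mathfrak{A},\mathfrak{A}_0)$ be a *-semisimple CQ*-algebra as in the context, let $X\in\mathfrak{A}$ be normal, $\varphi\in\mathcal{P}_{\mathfrak{A}_0}(\mathfrak{A})$ and $\alpha\in\mathbb{C}$. Then $\varphi$ is a generalized eigenvector of $X$ with generalized eigenvalue $\alpha$ if and only if $\varphi$ is a generalized eigenvector of $X^*$ with generalized eigenvalue $\overline{\alpha}$.
   Context: Let $\mathfrak{A}_0$ be a unital C*-algebra with C*-norm $\|\cdot\|_0$ and unit $I$, and $\|\cdot\|$ another norm on $\mathfrak{A}_0$ with $\|A\|\le\|A\|_0$, $\|AB\|\le\|A\|\,\|B\|_0$, $\|A^*\|=\|A\|$. $\mathfrak{A}$ is the $\|\cdot\|$-completion of $\mathfrak{A}_0$, with $XA,AX,X^*$ ($X\in\mathfrak{A},A\in\mathfrak{A}_0$) defined as $\|\cdot\|$-limits of $A_nA$, $AA_n$, $A_n^*$ for $A_n\in\mathfrak{A}_0$, $A_n\to X$. $\mathcal{P}_{\mathfrak{A}_0}(\mathfrak{A})$ is the set of sesquilinear forms $\varphi$ on $\mathfrak{A}\times\mathfrak{A}$ with $\varphi(X,X)\ge0$, $\varphi(XA,B)=\varphi(A,X^*B)$ for $X\in\mathfrak{A}$, $A,B\in\mathfrak{A}_0$, and $|\varphi(X,Y)|\le\gamma\|X\|\|Y\|$ for some $\gamma>0$; $\mathcal{S}_{\mathfrak{A}_0}(\mathfrak{A})$ is the subset with $\gamma\le1$. *-semisimple: for every $X\ne0$ there is $\varphi\in\mathcal{S}_{\mathfrak{A}_0}(\mathfrak{A})$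 with $\varphi(X,X)>0$. $X\in\mathfrak{A}$ is normal if $\varphi(XA,XA)=\varphi(X^*A,X^*A)$ for all $\varphi\in\mathcal{P}_{\mathfrak{A}_0}(\mathfrak{A})$, $A\in\mathfrak{A}_0$. A nonzero $\varphi\in\mathcal{P}_{\mathfrak{A}_0}(\mathfrak{A})$ is a generalized eigenvector of $Z\in\mathfrak{A}$ with generalized eigenvalue $\beta\in\mathbb{C}$ if there exists $A\in\mathfrak{A}_0$ with $\varphi(A,A)>0$ and $\varphi(ZA-\beta A,B)=0$ for all $B\in\mathfrak{A}_0$. *)

theory Defs
  imports "HOL-Analysis.Analysis"
begin

text \<open>The completion \<open>\<AA>\<close> is modelled as a real Banach space type \<open>'a\<close> (its norm is the
  norm \<open>\<parallel>.\<parallel>\<close> of the paper) equipped with a complex scalar multiplication \<open>sc\<close>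
  compatible with the real one, i.e. a complex Banach space.
  \<open>A0\<close> is the (dense) subset \<open>\<AA>\<^sub>0\<close>, \<open>m\<close> the multiplication, \<open>s\<close> the involution,
  \<open>n0\<close> the C*-norm on \<open>A0\<close>, \<open>I\<close> the unit.\<close>

definition complex_banach :: "(complex \<Rightarrow> 'a::{real_normed_vector,complete_space} \<Rightarrow> 'a) \<Rightarrow> bool" where
  "complex_banach sc \<longleftrightarrow>
     (\<forall>r x. sc (complex_of_real r) x = r *\<^sub>R x) \<and>
     (\<forall>a b x. sc (a * b) x = sc a (sc b x)) \<and>
     (\<forall>a b x. sc (a + b) x = sc a x + sc b x) \<and>
     (\<forall>a x y. sc a (x + y) = sc a x + sc a y) \<and>
     (\<forall>a x. norm (sc a x) = cmod a * norm x)"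

definition unital_Cstar_alg ::
  "(complex \<Rightarrow> 'a::{real_normed_vector,complete_space} \<Rightarrow> 'a) \<Rightarrow> 'a set \<Rightarrow> ('a \<Rightarrow> 'a \<Rightarrow> 'a) \<Rightarrow> ('a \<Rightarrow> 'a)
     \<Rightarrow> ('a \<Rightarrow> real) \<Rightarrow> 'a \<Rightarrow> bool" where
  "unital_Cstar_alg sc A0 m s n0 I \<longleftrightarrow>
     \<comment> \<open>A0 is a complex subspace closed under product and involution, containing I\<close>
     0 \<in> A0 \<and> (\<forall>x\<in>A0. \<forall>y\<in>A0. x + y \<in> A0) \<and> (\<forall>c. \<forall>x\<in>A0. sc c x \<in> A0) \<and>
     (\<forall>x\<in>A0. \<forall>y\<in>A0. m x y \<in> A0) \<and> (\<forall>x\<in>A0. s x \<in> A0) \<and> I \<in> A0 \<and>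
     \<comment> \<open>associative bilinear product with unit I\<close>
     (\<forall>x\<in>A0. \<forall>y\<in>A0. \<forall>z\<in>A0. m (x + y) z = m x z + m y z \<and> m x (y + z) = m x y + m x z
        \<and> m (m x y) z = m x (m y z)) \<and>
     (\<forall>c. \<forall>x\<in>A0. \<forall>y\<in>A0. m (sc c x) y = sc c (m x y) \<and> m x (sc c y) = sc c (m x y)) \<and>
     (\<forall>x\<in>A0. m I x = x \<and> m x I = x) \<and>
     \<comment> \<open>involution\<close>
     (\<forall>x\<in>A0. \<forall>y\<in>A0. s (x + y) = s x + s y \<and> s (m x y) = m (s y) (s x)) \<and>
     (\<forall>c. \<forall>x\<in>A0. s (sc c x) = sc (cnj c) (s x)) \<and>
     (\<forall>x\<in>A0. s (s x) = x) \<and>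
     \<comment> \<open>C*-norm\<close>
     (\<forall>x\<in>A0. n0 x = 0 \<longleftrightarrow> x = 0) \<and>
     (\<forall>x\<in>A0. \<forall>y\<in>A0. n0 (x + y) \<le> n0 x + n0 y \<and> n0 (m x y) \<le> n0 x * n0 y) \<and>
     (\<forall>c. \<forall>x\<in>A0. n0 (sc c x) = cmod c * n0 x) \<and>
     (\<forall>x\<in>A0. n0 (m (s x) x) = (n0 x)\<^sup>2) \<and>
     \<comment> \<open>completeness of A0 w.r.t. n0\<close>
     (\<forall>f. (\<forall>k. f k \<in> A0) \<and> (\<forall>e>0. \<exists>N. \<forall>i\<ge>N. \<forall>j\<ge>N. n0 (f i - f j) < e)
          \<longrightarrow> (\<exists>x\<in>A0. (\<lambda>k. n0 (f k - x)) \<longlonglongrightarrow> 0))"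

definition CQ_setting ::
  "(complex \<Rightarrow> 'a::{real_normed_vector,complete_space} \<Rightarrow> 'a) \<Rightarrow> 'a set \<Rightarrow> ('a \<Rightarrow> 'a \<Rightarrow> 'a) \<Rightarrow> ('a \<Rightarrow> 'a)
     \<Rightarrow> ('a \<Rightarrow> real) \<Rightarrow> 'a \<Rightarrow> bool" where
  "CQ_setting sc A0 m s n0 I \<longleftrightarrow>
     complex_banach sc \<and> unital_Cstar_alg sc A0 m s n0 I \<and>
     (\<forall>x\<in>A0. norm x \<le> n0 x) \<and>
     (\<forall>x\<in>A0. \<forall>y\<in>A0. norm (m x y) \<le> norm x * n0 y) \<and>
     (\<forall>x\<in>A0. norm (s x) = norm x) \<and>
     \<comment> \<open>'a is the completion: A0 is dense\<close>
     closure A0 = UNIV \<and>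
     \<comment> \<open>XA, AX, X* are the limits of A_n A, A A_n, A_n* for A_n in A0, A_n \<rightarrow> X\<close>
     (\<forall>f X. (\<forall>k. f k \<in> A0) \<and> f \<longlonglongrightarrow> X \<longrightarrow>
        (\<forall>A\<in>A0. (\<lambda>k. m (f k) A) \<longlonglongrightarrow> m X A \<and> (\<lambda>k. m A (f k)) \<longlonglongrightarrow> m A X) \<and>
        (\<lambda>k. s (f k)) \<longlonglongrightarrow> s X)"

definition sesquilinear :: "(complex \<Rightarrow> 'a::real_normed_vector \<Rightarrow> 'a) \<Rightarrow> ('a \<Rightarrow> 'a \<Rightarrow> complex) \<Rightarrow> bool" where
  "sesquilinear sc \<phi> \<longleftrightarrow>
     (\<forall>x y z. \<phi> (x + y) z = \<phi> x z + \<phi> y z \<and> \<phi> z (x + y) = \<phi> z x + \<phi> z y) \<and>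
     (\<forall>c x y. \<phi> (sc c x) y = c * \<phi> x y \<and> \<phi> x (sc c y) = cnj c * \<phi> x y)"

definition P_forms ::
  "(complex \<Rightarrow> 'a::real_normed_vector \<Rightarrow> 'a) \<Rightarrow> 'a set \<Rightarrow> ('a \<Rightarrow> 'a \<Rightarrow> 'a) \<Rightarrow> ('a \<Rightarrow> 'a)
     \<Rightarrow> ('a \<Rightarrow> 'a \<Rightarrow> complex) set" where
  "P_forms sc A0 m s = {\<phi>. sesquilinear sc \<phi> \<and>
     (\<forall>X. Im (\<phi> X X) = 0 \<and> Re (\<phi> X X) \<ge> 0) \<and>
     (\<forall>X. \<forall>A\<in>A0. \<forall>B\<in>A0. \<phi> (m X A) B = \<phi> A (m (s X) B)) \<and>
     (\<exists>\<gamma>>0. \<forall>X Y. cmod (\<phi> X Y) \<le> \<gamma> * norm X * norm Y)}"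

definition S_forms ::
  "(complex \<Rightarrow> 'a::real_normed_vector \<Rightarrow> 'a) \<Rightarrow> 'a set \<Rightarrow> ('a \<Rightarrow> 'a \<Rightarrow> 'a) \<Rightarrow> ('a \<Rightarrow> 'a)
     \<Rightarrow> ('a \<Rightarrow> 'a \<Rightarrow> complex) set" where
  "S_forms sc A0 m s = {\<phi>. sesquilinear sc \<phi> \<and>
     (\<forall>X. Im (\<phi> X X) = 0 \<and> Re (\<phi> X X) \<ge> 0) \<and>
     (\<forall>X. \<forall>A\<in>A0. \<forall>B\<in>A0. \<phi> (m X A) B = \<phi> A (m (s X) B)) \<and>
     (\<exists>\<gamma>>0. \<gamma> \<le> 1 \<and> (\<forall>X Y. cmod (\<phi> X Y) \<le> \<gamma> * norm X * norm Y))}"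

definition star_semisimple where
  "star_semisimple sc A0 m s \<longleftrightarrow>
     (\<forall>X. X \<noteq> 0 \<longrightarrow> (\<exists>\<phi>\<in>S_forms sc A0 m s. Im (\<phi> X X) = 0 \<and> Re (\<phi> X X) > 0))"

definition normal_elem where
  "normal_elem sc A0 m s X \<longleftrightarrow>
     (\<forall>\<phi>\<in>P_forms sc A0 m s. \<forall>A\<in>A0. \<phi> (m X A) (m X A) = \<phi> (m (s X) A) (m (s X) A))"

definition gen_eigenvector where
  "gen_eigenvector sc A0 m s \<phi> Z \<beta> \<longleftrightarrow>
     \<phi> \<in> P_forms sc A0 m s \<and> \<phi> \<noteq> (\<lambda>_ _. 0) \<and>
     (\<exists>A\<in>A0. Im (\<phi> A A) = 0 \<and> Re (\<phi> A A) > 0 \<and>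
        (\<forall>B\<in>A0. \<phi> (m Z A - sc \<beta> A) B = 0))"

end

theory Submission
  imports Defs
begin

lemma sq_sub:
  assumes "sesquilinear sc \<phi>"
  shows "\<phi> (x - y) z = \<phi> x z - \<phi> y z" "\<phi> z (x - y) = \<phi> z x - \<phi> z y"
proof -
  have "\<phi> x z = \<phi> ((x - y) + y) z" by simp
  also have "\<dots> = \<phi> (x - y) z + \<phi> y z" using assms unfolding sesquilinear_def by blast
  finally show "\<phi> (x - y) z = \<phi> x z - \<phi> y z" by simp
  have "\<phi> z x = \<phi> z ((x - y) + y)" by simp
  also have "\<dots> = \<phi> z (x - y) + \<phi> z y" using assms unfolding sesquilinear_def by blast
  finally show "\<phi> z (x - y) = \<phi> z x - \<phi> z y" by simp
qed

lemma sq_herm: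
  assumes S: "sesquilinear sc \<phi>" and R: "\<forall>X. Im (\<phi> X X) = 0"
  shows "\<phi> y x = cnj (\<phi> x y)"
proof -
  have add: "\<And>x y z. \<phi> (x + y) z = \<phi> x z + \<phi> y z \<and> \<phi> z (x + y) = \<phi> z x + \<phi> z y"
    and scl: "\<And>c x y. \<phi> (sc c x) y = c * \<phi> x y \<and> \<phi> x (sc c y) = cnj c * \<phi> x y"
    using S unfolding sesquilinear_def by blast+
  have e1: "\<phi> (x + y) (x + y) = \<phi> x x + \<phi> x y + \<phi> y x + \<phi> y y" using add by simp
  have e2: "\<phi> (x + sc \<i> y) (x + sc \<i> y) = \<phi> x x - \<i> * \<phi> x y + \<i> * \<phi> y x + \<phi> y y"
    using add scl by (simp add: algebra_simps)
  have i1: "Im (\<phi> x y) + Im (\<phi> y x) = 0" using arg_cong[OF e1, of Im] R by simp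
  have i2: "Re (\<phi> y x) - Re (\<phi> x y) = 0" using arg_cong[OF e2, of Im] R by simp
  show ?thesis using i1 i2 by (simp add: complex_eq_iff)
qed

lemma sq_cs:
  assumes S: "sesquilinear sc \<phi>" and R: "\<forall>X. Im (\<phi> X X) = 0 \<and> Re (\<phi> X X) \<ge> 0"
    and W: "\<phi> W W = 0"
  shows "\<phi> W B = 0"
proof (rule ccontr)
  assume a0: "\<phi> W B \<noteq> 0"
  define a where "a = \<phi> W B"
  define p where "p = Re (\<phi> B B)"
  define n where "n = (cmod a)^2"
  have np: "n > 0" using a0 unfolding n_def a_def by simp
  define c where "c = - complex_of_real ((p+1)/(2*n)) * cnj a"
  have add: "\<And>x y z. \<phi> (x + y) z = \<phi> x z + \<phi> y z \<and> \<phi> z (x + y) = \<phi> z x + \<phi> z y"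
    and scl: "\<And>c x y. \<phi> (sc c x) y = c * \<phi> x y \<and> \<phi> x (sc c y) = cnj c * \<phi> x y"
    using S unfolding sesquilinear_def by blast+
  have h: "\<phi> B W = cnj a" unfolding a_def using sq_herm[OF S] R by blast
  have e: "\<phi> (sc c W + B) (sc c W + B) = c * a + cnj c * cnj a + \<phi> B B"
    using add scl W h a_def by (simp add: algebra_simps)
  have ca: "c * a = - complex_of_real ((p+1)/2)"
  proof -
    have "cnj a * a = complex_of_real n" unfolding n_def by (metis complex_norm_square mult.commute of_real_power)
    then have "c * a = - complex_of_real ((p+1)/(2*n)) * complex_of_real n"
      unfolding c_def by (metis mult.assoc)
    also have "\<dots> = - complex_of_real ((p+1)/(2*n) * n)" by (simp only: of_real_mult minus_mult_left)
    also have "(p+1)/(2*n) * n = (p+1)/2" using np by (simp add: field_simps)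
    finally show ?thesis .
  qed
  have "Re (\<phi> (sc c W + B) (sc c W + B)) = -1"
  proof -
    have "cnj c * cnj a = cnj (c * a)" by simp
    then have "\<phi> (sc c W + B) (sc c W + B) = c * a + cnj (c * a) + \<phi> B B" using e by simp
    then have "Re (\<phi> (sc c W + B) (sc c W + B)) = Re (c * a) + Re (cnj (c * a)) + p"
      by (simp add: p_def)
    also have "\<dots> = -1" using ca by simp
    finally show ?thesis .
  qed
  then show False using R by (metis add.inverse_neutral neg_0_le_iff_le not_one_le_zero)
qed

lemma sq_dense:
  assumes S: "sesquilinear sc \<phi>" and bd: "\<forall>X Y. cmod (\<phi> X Y) \<le> \<gamma> * norm X * norm Y"
    and g: "\<gamma> > 0" and cl: "closure A0 = UNIV" and z: "\<forall>B\<in>A0. \<phi> W B = 0"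
  shows "\<phi> W Y = 0"
proof (rule ccontr)
  assume "\<phi> W Y \<noteq> 0"
  define d where "d = cmod (\<phi> W Y)"
  have dp: "d > 0" using \<open>\<phi> W Y \<noteq> 0\<close> d_def by simp
  define e where "e = d / (\<gamma> * (norm W + 1))"
  have ep: "e > 0" unfolding e_def using dp g by (intro divide_pos_pos mult_pos_pos) (auto intro: add_nonneg_pos)
  have "Y \<in> closure A0" using cl by simp
  then obtain B where B: "B \<in> A0" "dist B Y < e" using ep closure_approachable by metis
  have "\<phi> W Y = \<phi> W (Y - B) + \<phi> W B" using sq_sub[OF S] by simp
  then have eq: "\<phi> W Y = \<phi> W (Y - B)" using z B by simp
  have "d \<le> \<gamma> * norm W * norm (Y - B)" using bd eq d_def by metis
  also have "\<dots> \<le> \<gamma> * norm W * e"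
    using B g by (intro mult_left_mono) (auto simp: dist_norm norm_minus_commute)
  also have "\<dots> < d"
  proof -
    have "norm W + 1 > 0" by (simp add: add_nonneg_pos)
    have "\<gamma> * norm W * e = d * (norm W / (norm W + 1))" unfolding e_def using g
      \<open>norm W + 1 > 0\<close> by (simp add: divide_simps)
    also have "\<dots> < d * 1" using dp \<open>norm W + 1 > 0\<close> by (intro mult_strict_left_mono) (auto simp: divide_simps)
    finally show ?thesis by simp
  qed
  finally show False by simp
qed

lemma eig_iff_Q:
  assumes P: "\<phi> \<in> P_forms sc A0 m s" and cl: "closure A0 = UNIV"
  shows "(\<forall>B\<in>A0. \<phi> (m Z A - sc \<beta> A) B = 0) \<longleftrightarrow>
         \<phi> (m Z A - sc \<beta> A) (m Z A - sc \<beta> A) = 0"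
proof -
  have S: "sesquilinear sc \<phi>" and R: "\<forall>X. Im (\<phi> X X) = 0 \<and> Re (\<phi> X X) \<ge> 0"
    and bd: "\<exists>\<gamma>>0. \<forall>X Y. cmod (\<phi> X Y) \<le> \<gamma> * norm X * norm Y"
    using P unfolding P_forms_def by blast+
  obtain \<gamma> where g: "\<gamma> > 0" "\<forall>X Y. cmod (\<phi> X Y) \<le> \<gamma> * norm X * norm Y" using bd by blast
  show ?thesis
  proof
    assume "\<forall>B\<in>A0. \<phi> (m Z A - sc \<beta> A) B = 0"
    then show "\<phi> (m Z A - sc \<beta> A) (m Z A - sc \<beta> A) = 0"
      using sq_dense[OF S g(2) g(1) cl] by blast
  next
    assume "\<phi> (m Z A - sc \<beta> A) (m Z A - sc \<beta> A) = 0"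
    then show "\<forall>B\<in>A0. \<phi> (m Z A - sc \<beta> A) B = 0" using sq_cs[OF S R] by blast
  qed
qed

lemma Q_eq:
  assumes P: "\<phi> \<in> P_forms sc A0 m s" and N: "normal_elem sc A0 m s X" and A: "A \<in> A0"
  shows "\<phi> (m X A - sc \<alpha> A) (m X A - sc \<alpha> A) = \<phi> (m (s X) A - sc (cnj \<alpha>) A) (m (s X) A - sc (cnj \<alpha>) A)"
proof -
  have S: "sesquilinear sc \<phi>" and R: "\<forall>X. Im (\<phi> X X) = 0"
    and ad: "\<forall>X. \<forall>A\<in>A0. \<forall>B\<in>A0. \<phi> (m X A) B = \<phi> A (m (s X) B)"
    using P unfolding P_forms_def by blast+
  have scl: "\<And>c x y. \<phi> (sc c x) y = c * \<phi> x y \<and> \<phi> x (sc c y) = cnj c * \<phi> x y"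
    using S unfolding sesquilinear_def by blast+
  have nn: "\<phi> (m X A) (m X A) = \<phi> (m (s X) A) (m (s X) A)" using N P A unfolding normal_elem_def by blast
  have k1: "\<phi> (m X A) A = \<phi> A (m (s X) A)" using ad A by blast
  have k2: "\<phi> A (m X A) = \<phi> (m (s X) A) A"
    using k1 sq_herm[OF S R] by metis
  show ?thesis
    using nn k1 k2 by (simp add: sq_sub[OF S] scl algebra_simps)
qed

theorem proposition4p15:
  fixes sc :: "complex \<Rightarrow> 'a::{real_normed_vector,complete_space} \<Rightarrow> 'a"
    and A0 :: "'a set" and m :: "'a \<Rightarrow> 'a \<Rightarrow> 'a" and s :: "'a \<Rightarrow> 'a"
    and n0 :: "'a \<Rightarrow> real" and I :: 'a
    and X :: 'a and \<phi> :: "'a \<Rightarrow> 'a \<Rightarrow> complex" and \<alpha> :: complex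
  assumes "CQ_setting sc A0 m s n0 I"
    and "star_semisimple sc A0 m s"
    and "normal_elem sc A0 m s X"
    and "\<phi> \<in> P_forms sc A0 m s"
  shows "gen_eigenvector sc A0 m s \<phi> X \<alpha> \<longleftrightarrow> gen_eigenvector sc A0 m s \<phi> (s X) (cnj \<alpha>)"
proof -
  have cl: "closure A0 = UNIV" using assms(1) unfolding CQ_setting_def by blast
  have key: "\<And>A. A \<in> A0 \<Longrightarrow> (\<forall>B\<in>A0. \<phi> (m X A - sc \<alpha> A) B = 0) \<longleftrightarrow>
       (\<forall>B\<in>A0. \<phi> (m (s X) A - sc (cnj \<alpha>) A) B = 0)"
    using eig_iff_Q[OF assms(4) cl] Q_eq[OF assms(4) assms(3)] by metis
  show ?thesis unfolding gen_eigenvector_def using key by blast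
qed

end
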